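(* Let $k\ge 2$ and $n\ge 1$. For any $c\in\mathbb{N}$, there exists a classical $k$-party SMP protocol for the $k$-party equality function on $n$-bit inputs (the function of $x_1,\dots,x_k\in\{0,1\}^n$ that equals $1$ if and only if $x_1=x_2=\dots=x_k$), in which XOR-shared randomness is used and each player sends $c$ bits to the referee, such that: if $x_1=x_2=\dots=x_k$, the referee's answer is always $1$; otherwise, the referee's answer is $0$ with probability $1-1/2^c$.
   Context: The $k$-party SMP model: players $A_1,\dots,A_k$, where $A_i$ receives $x_i$, each send one message to a referee, who computes the output from the messages. XOR-shared randomness: each player $A_i$ receives an arbitrarily long random string $r_i$ (independent of the input) such that every $k-1$ of the strings $r_1,\dots,r_k$ are uniform and mutually independent, while the bitwise XOR $r_1\oplus\dots\oplus r_k$ is identically $0$. *)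

theory Defs
  imports "HOL-Probability.Probability"
begin

text \<open>Bit strings are boolean lists; True = 1. Bitwise XOR of two strings.\<close>
definition xor_bits :: "bool list \<Rightarrow> bool list \<Rightarrow> bool list" where
  "xor_bits a b = map2 (\<noteq>) a b"

definition xor_all :: "nat \<Rightarrow> bool list list \<Rightarrow> bool list" where
  "xor_all m rs = foldr xor_bits rs (replicate m False)"

definition bitstrings :: "nat \<Rightarrow> bool list set" where
  "bitstrings m = {r. length r = m}"

text \<open>XOR-shared randomness for k players with strings of length m:
  r_1,...,r_{k-1} uniform and independent, r_k their XOR (so the total XOR is 0,
  and every k-1 of them are uniform and independent).\<close>
definition xor_shared :: "nat \<Rightarrow> nat \<Rightarrow> bool list list pmf" where
  "xor_shared k m =
     map_pmf (\<lambda>rs. rs @ [xor_all m rs])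
       (pmf_of_set {rs. length rs = k - 1 \<and> (\<forall>r\<in>set rs. r \<in> bitstrings m)})"

text \<open>A k-party SMP protocol: player i (i < k) sends msg i x_i r_i; the referee
  applies ref to the list of the k messages. Output distribution on inputs xs.\<close>
definition smp_output ::
  "nat \<Rightarrow> nat \<Rightarrow> (nat \<Rightarrow> bool list \<Rightarrow> bool list \<Rightarrow> bool list) \<Rightarrow> (bool list list \<Rightarrow> bool)
    \<Rightarrow> bool list list \<Rightarrow> bool pmf" where
  "smp_output k m msg ref xs =
     map_pmf (\<lambda>rs. ref (map (\<lambda>i. msg i (xs ! i) (rs ! i)) [0..<k])) (xor_shared k m)"

end

theory Submission
  imports Defs
begin

fun par :: "bool list \<Rightarrow> bool" where
  "par [] = False" | "par (b#bs) = (b \<noteq> par bs)"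

lemma par_map_neq: "par (map (\<lambda>i. f i \<noteq> g i) xs) = (par (map f xs) \<noteq> par (map g xs))"
  by (induction xs) auto

lemma par_false: "(\<forall>x\<in>set xs. \<not> f x) \<Longrightarrow> \<not> par (map f xs)"
  by (induction xs) auto

lemma par_single: "distinct xs \<Longrightarrow> p \<in> set xs \<Longrightarrow> (\<forall>x\<in>set xs. x \<noteq> p \<longrightarrow> \<not> f x)
  \<Longrightarrow> par (map f xs) = f p"
proof (induction xs)
  case Nil then show ?case by simp
next
  case (Cons a xs)
  show ?case
  proof (cases "a = p")
    case True
    then have "\<forall>x\<in>set xs. \<not> f x" using Cons.prems by auto
    then show ?thesis using True par_false by auto
  next
    case False
    then show ?thesis using Cons by auto
  qed
qed

lemma par_append: "par (xs @ ys) = (par xs \<noteq> par ys)"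
  by (induction xs) auto

definition hb :: "nat \<Rightarrow> nat \<Rightarrow> bool list \<Rightarrow> bool list \<Rightarrow> bool" where
  "hb n j r x = par (map (\<lambda>l. r ! (j*n+l) \<and> x ! l) [0..<n])"

lemma idx_lt: "j < c \<Longrightarrow> l < n \<Longrightarrow> j*n + l < c*(n::nat)"
proof -
  assume "j < c" "l < n"
  then have "j*n + l < j*n + n" by simp
  also have "\<dots> = Suc j * n" by simp
  also have "\<dots> \<le> c * n" using \<open>j<c\<close> by (intro mult_le_mono1) simp
  finally show ?thesis .
qed

lemma hb_xor: "length r = c*n \<Longrightarrow> length s = c*n \<Longrightarrow> j < c \<Longrightarrow>
  hb n j (xor_bits r s) x = (hb n j r x \<noteq> hb n j s x)"
proof -
  assume a: "length r = c*n" "length s = c*n" "j < c"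
  have eq: "map (\<lambda>l. xor_bits r s ! (j*n+l) \<and> x ! l) [0..<n]
      = map (\<lambda>l. (r ! (j*n+l) \<and> x ! l) \<noteq> (s ! (j*n+l) \<and> x ! l)) [0..<n]"
    by (rule map_cong) (use a idx_lt[OF a(3)] in \<open>auto simp: xor_bits_def\<close>)
  show ?thesis by (simp only: hb_def eq par_map_neq)
qed

lemma hb_zero: "j < c \<Longrightarrow> \<not> hb n j (replicate (c*n) False) x"
  unfolding hb_def by (rule par_false) (auto dest: idx_lt)

lemma xor_all_len: "\<forall>r\<in>set rs. length r = m \<Longrightarrow> length (xor_all m rs) = m"
  by (induction rs) (auto simp: xor_all_def xor_bits_def)

lemma hb_xor_all: "\<forall>r\<in>set rs. length r = c*n \<Longrightarrow> j < c \<Longrightarrow>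
  hb n j (xor_all (c*n) rs) x = par (map (\<lambda>r. hb n j r x) rs)"
proof (induction rs)
  case Nil then show ?case using hb_zero by (simp add: xor_all_def)
next
  case (Cons a rs)
  have la: "length a = c*n" and lr: "\<forall>r\<in>set rs. length r = c*n" using Cons.prems by auto
  have e: "xor_all (c*n) (a#rs) = xor_bits a (xor_all (c*n) rs)" by (simp add: xor_all_def)
  have "hb n j (xor_bits a (xor_all (c*n) rs)) x = (hb n j a x \<noteq> hb n j (xor_all (c*n) rs) x)"
    by (rule hb_xor) (use la xor_all_len[OF lr] Cons.prems in auto)
  moreover have "hb n j (xor_all (c*n) rs) x = par (map (\<lambda>r. hb n j r x) rs)"
    using Cons.IH lr Cons.prems(2) by blast
  ultimately show ?case using e by simp
qed

lemma xor_bits_cancel: "length a = length e \<Longrightarrow> xor_bits (xor_bits a e) e = a"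
  by (induction a e rule: list_induct2) (auto simp: xor_bits_def)

lemma xor_bits_len: "length (xor_bits a b) = min (length a) (length b)"
  by (simp add: xor_bits_def)


definition G :: "nat \<Rightarrow> bool list list \<Rightarrow> nat \<Rightarrow> bool list list \<Rightarrow> nat \<Rightarrow> bool" where
  "G n xs k rs j = par (map (\<lambda>i. hb n j (rs!i) (xs!i) \<noteq> hb n j (rs!i) (xs!(k-1))) [0..<k-1])"

definition msgf :: "nat \<Rightarrow> nat \<Rightarrow> nat \<Rightarrow> bool list \<Rightarrow> bool list \<Rightarrow> bool list" where
  "msgf n c = (\<lambda>i x r. map (\<lambda>j. hb n j r x) [0..<c])"

definition reff :: "nat \<Rightarrow> bool list list \<Rightarrow> bool" where
  "reff c = (\<lambda>ms. \<forall>j<c. \<not> par (map (\<lambda>v. v!j) ms))"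

lemma out_val:
  assumes "k \<ge> 2" "length rs = k-1" "\<forall>r\<in>set rs. length r = c*n"
  shows "reff c (map (\<lambda>i. msgf n c i (xs!i) ((rs @ [xor_all (c*n) rs])!i)) [0..<k])
         = (\<forall>j<c. \<not> G n xs k rs j)"
proof -
  have "par (map (\<lambda>v. v!j) (map (\<lambda>i. msgf n c i (xs!i) ((rs @ [xor_all (c*n) rs])!i)) [0..<k]))
        = G n xs k rs j" if j: "j < c" for j
  proof -
    have k: "[0..<k] = [0..<k-1] @ [k-1]" using assms(1) by (cases k) auto
    have m1: "map (\<lambda>v. v!j) (map (\<lambda>i. msgf n c i (xs!i) ((rs @ [xor_all (c*n) rs])!i)) [0..<k])
        = map (\<lambda>i. hb n j (rs!i) (xs!i)) [0..<k-1] @ [hb n j (xor_all (c*n) rs) (xs!(k-1))]"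
      unfolding k using j assms(2) by (auto simp: msgf_def nth_append)
    have m2: "hb n j (xor_all (c*n) rs) (xs!(k-1)) = par (map (\<lambda>r. hb n j r (xs!(k-1))) rs)"
      using hb_xor_all assms(3) j by blast
    have rs: "rs = map ((!) rs) [0..<k-1]" using assms(2) map_nth by metis
    have m3: "map (\<lambda>r. hb n j r (xs!(k-1))) rs = map (\<lambda>i. hb n j (rs!i) (xs!(k-1))) [0..<k-1]"
      by (subst rs) (simp only: map_map comp_def)
    show ?thesis unfolding m1 G_def par_map_neq par_append m2 m3 by simp
  qed
  then show ?thesis unfolding reff_def by simp
qed


definition Ev :: "nat \<Rightarrow> nat \<Rightarrow> nat \<Rightarrow> bool list \<Rightarrow> bool list" where
  "Ev n c p t = map (\<lambda>q. q mod n = p \<and> t!(q div n)) [0..<c*n]"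

lemma Ev_len: "length (Ev n c p t) = c*n" by (simp add: Ev_def)

lemma hb_Ev: assumes "j < c" "p < n" shows "hb n j (Ev n c p t) x = (t!j \<and> x!p)"
proof -
  have e1: "map (\<lambda>l. Ev n c p t ! (j*n+l) \<and> x ! l) [0..<n] = map (\<lambda>l. l = p \<and> t!j \<and> x!l) [0..<n]"
  proof (rule map_cong)
    fix l assume "l \<in> set [0..<n]"
    then have l: "l < n" by simp
    have "(j*n+l) mod n = l" "(j*n+l) div n = j" using l by simp_all
    then show "(Ev n c p t ! (j*n+l) \<and> x ! l) = (l = p \<and> t!j \<and> x!l)"
      using idx_lt[OF assms(1) l] by (simp add: Ev_def)
  qed simp
  have e2: "par (map (\<lambda>l. l = p \<and> t!j \<and> x!l) [0..<n]) = (p = p \<and> t!j \<and> x!p)"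
    by (rule par_single) (use assms in auto)
  show ?thesis unfolding hb_def e1 e2 by simp
qed

definition tau :: "nat \<Rightarrow> nat \<Rightarrow> nat \<Rightarrow> nat \<Rightarrow> bool list \<Rightarrow> bool list list \<Rightarrow> bool list list" where
  "tau n c p i0 t rs = rs[i0 := xor_bits (rs!i0) (Ev n c p t)]"

lemma count:
  assumes "k \<ge> 2" "length xs = k" "\<forall>x\<in>set xs. length x = n"
    and i0: "i0 < k-1" and p: "p < n" and d: "xs!i0!p \<noteq> xs!(k-1)!p"
    and S: "S = {rs. length rs = k - 1 \<and> (\<forall>r\<in>set rs. r \<in> bitstrings (c*n))}"
  shows "card {rs\<in>S. \<forall>j<c. \<not> G n xs k rs j} * 2^c = card S" and "finite S" and "S \<noteq> {}"
proof -
  define m where "m = c*n"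
  define A where "A u = {rs\<in>S. \<forall>j<c. G n xs k rs j = u!j}" for u
  define T where "T t = tau n c p i0 t" for t
  have Sin: "rs \<in> S \<longleftrightarrow> length rs = k-1 \<and> (\<forall>r\<in>set rs. length r = m)" for rs
    by (simp add: S bitstrings_def m_def)
  have S2: "S = {xs. set xs \<subseteq> bitstrings m \<and> length xs = k-1}"
    by (auto simp: S m_def)
  have fb: "finite (bitstrings m')" for m'
    using finite_lists_length_eq[of "UNIV::bool set" m'] by (simp add: bitstrings_def)
  show finS: "finite S" unfolding S2 by (rule finite_lists_length_eq[OF fb])
  have "replicate (k-1) (replicate m False) \<in> S" by (simp add: Sin)
  then show "S \<noteq> {}" by blast
  have TS: "T t rs \<in> S" if "rs \<in> S" for t rs
  proof -
    have l: "length rs = k-1" "\<forall>r\<in>set rs. length r = m" using that Sin by auto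
    have "length (rs!i0) = m" using l i0 by auto
    then have "length (xor_bits (rs!i0) (Ev n c p t)) = m" by (simp add: xor_bits_len Ev_len m_def)
    then show ?thesis using l set_update_subset_insert[of rs i0]
      by (auto simp: Sin T_def tau_def)
  qed
  have TT: "T t (T t rs) = rs" if "rs \<in> S" for t rs
  proof -
    have l: "length rs = k-1" "\<forall>r\<in>set rs. length r = m" using that Sin by auto
    have "length (rs!i0) = length (Ev n c p t)" using l i0 by (auto simp: Ev_len m_def)
    then show ?thesis using l i0 by (simp add: T_def tau_def xor_bits_cancel)
  qed
  have GT: "G n xs k (T t rs) j = (G n xs k rs j \<noteq> t!j)" if "rs \<in> S" "j < c" for t rs j
  proof -
    have l: "length rs = k-1" "\<forall>r\<in>set rs. length r = m" using that Sin by auto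
    have lr0: "length (rs!i0) = c*n" using l i0 by (auto simp: m_def)
    have e1: "map (\<lambda>i. hb n j (T t rs!i) (xs!i) \<noteq> hb n j (T t rs!i) (xs!(k-1))) [0..<k-1]
        = map (\<lambda>i. (hb n j (rs!i) (xs!i) \<noteq> hb n j (rs!i) (xs!(k-1))) \<noteq> (i = i0 \<and> t!j)) [0..<k-1]"
    proof (rule map_cong)
      fix i assume "i \<in> set [0..<k-1]"
      show "(hb n j (T t rs!i) (xs!i) \<noteq> hb n j (T t rs!i) (xs!(k-1)))
          = ((hb n j (rs!i) (xs!i) \<noteq> hb n j (rs!i) (xs!(k-1))) \<noteq> (i = i0 \<and> t!j))"
      proof (cases "i = i0")
        case True
        have "T t rs ! i = xor_bits (rs!i0) (Ev n c p t)" using True l i0 by (simp add: T_def tau_def)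
        then show ?thesis using True hb_xor[OF lr0 Ev_len that(2)] hb_Ev[OF that(2) p] d by auto
      next
        case False
        then show ?thesis by (simp add: T_def tau_def)
      qed
    qed simp
    have e2: "par (map (\<lambda>i. i = i0 \<and> t!j) [0..<k-1]) = (i0 = i0 \<and> t!j)"
      by (rule par_single) (use i0 in auto)
    show ?thesis unfolding G_def e1 par_map_neq[of _ "\<lambda>i. i = i0 \<and> t!j"] e2 by simp
  qed
  define z where "z = replicate c False"
  have A0: "A z = {rs\<in>S. \<forall>j<c. \<not> G n xs k rs j}" by (auto simp: A_def z_def)
  have bij: "bij_betw (T u) (A z) (A u)" if u: "u \<in> bitstrings c" for u
  proof (rule bij_betw_byWitness[where f' = "T u"])
    show "\<forall>a\<in>A z. T u (T u a) = a" using TT by (auto simp: A_def)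
    show "\<forall>a\<in>A u. T u (T u a) = a" using TT by (auto simp: A_def)
    show "T u ` A z \<subseteq> A u" using TS GT by (auto simp: A_def z_def)
    show "T u ` A u \<subseteq> A z" using TS GT by (auto simp: A_def z_def)
  qed
  have cardA: "card (A u) = card (A z)" if "u \<in> bitstrings c" for u
    using bij_betw_same_card[OF bij[OF that]] by simp
  have Sun: "S = (\<Union>u\<in>bitstrings c. A u)"
  proof
    show "S \<subseteq> (\<Union>u\<in>bitstrings c. A u)"
    proof
      fix rs assume rs: "rs \<in> S"
      have "map (\<lambda>j. G n xs k rs j) [0..<c] \<in> bitstrings c" by (simp add: bitstrings_def)
      moreover have "rs \<in> A (map (\<lambda>j. G n xs k rs j) [0..<c])" using rs by (simp add: A_def)
      ultimately show "rs \<in> (\<Union>u\<in>bitstrings c. A u)" by blast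
    qed
  qed (auto simp: A_def)
  have disj: "\<forall>u\<in>bitstrings c. \<forall>v\<in>bitstrings c. u \<noteq> v \<longrightarrow> A u \<inter> A v = {}"
  proof (intro ballI impI)
    fix u v assume uv: "u \<in> bitstrings c" "v \<in> bitstrings c" "u \<noteq> v"
    show "A u \<inter> A v = {}"
    proof (rule ccontr)
      assume "A u \<inter> A v \<noteq> {}"
      then obtain rs where "rs \<in> A u" "rs \<in> A v" by blast
      then have "\<forall>j<c. u!j = v!j" by (auto simp: A_def)
      then have "u = v" using uv(1,2) by (simp add: bitstrings_def nth_equalityI)
      then show False using uv(3) by simp
    qed
  qed
  have fA: "\<forall>u\<in>bitstrings c. finite (A u)" using finS by (auto simp: A_def)
  have "card S = (\<Sum>u\<in>bitstrings c. card (A u))"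
    unfolding Sun by (rule card_UN_disjoint[OF fb fA disj])
  also have "\<dots> = (\<Sum>u\<in>bitstrings c. card (A z))" using cardA by simp
  also have "\<dots> = card (bitstrings c) * card (A z)" by simp
  also have "card (bitstrings c) = 2^c"
    using card_lists_length_eq[of "UNIV::bool set" c] by (simp add: bitstrings_def)
  finally show "card {rs\<in>S. \<forall>j<c. \<not> G n xs k rs j} * 2^c = card S" using A0 by simp
qed


theorem claim3:
  fixes k n c :: nat
  assumes "k \<ge> 2" and "n \<ge> 1"
  shows "\<exists>(m::nat) msg ref.
    (\<forall>i<k. \<forall>x r. length x = n \<longrightarrow> length r = m \<longrightarrow> length (msg i x r) = c) \<and>
    (\<forall>xs. length xs = k \<and> (\<forall>x\<in>set xs. length x = n) \<longrightarrow>
       ((\<forall>i<k. \<forall>j<k. xs ! i = xs ! j) \<longrightarrow>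
           (\<forall>b\<in>set_pmf (smp_output k m msg ref xs). b = True)) \<and>
       (\<not> (\<forall>i<k. \<forall>j<k. xs ! i = xs ! j) \<longrightarrow>
           measure_pmf.prob (smp_output k m msg ref xs) {False} = 1 - 1 / 2 ^ c))"
proof -
  define m where "m = c*n"
  define S where "S = {rs. length rs = k - 1 \<and> (\<forall>r\<in>set rs. r \<in> bitstrings m)}"
  have fb: "finite (bitstrings m')" for m'
    using finite_lists_length_eq[of "UNIV::bool set" m'] by (simp add: bitstrings_def)
  have S2: "S = {xs. set xs \<subseteq> bitstrings m \<and> length xs = k-1}" by (auto simp: S_def)
  have finS: "finite S" unfolding S2 by (rule finite_lists_length_eq[OF fb])
  have "replicate (k-1) (replicate m False) \<in> S" by (simp add: S_def bitstrings_def)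
  then have neS: "S \<noteq> {}" by blast
  have P1: "\<forall>i<k. \<forall>x r. length x = n \<longrightarrow> length r = m \<longrightarrow> length (msgf n c i x r) = c"
    by (simp add: msgf_def)
  have P2: "length xs = k \<and> (\<forall>x\<in>set xs. length x = n) \<longrightarrow>
       ((\<forall>i<k. \<forall>j<k. xs ! i = xs ! j) \<longrightarrow>
           (\<forall>b\<in>set_pmf (smp_output k m (msgf n c) (reff c) xs). b = True)) \<and>
       (\<not> (\<forall>i<k. \<forall>j<k. xs ! i = xs ! j) \<longrightarrow>
           measure_pmf.prob (smp_output k m (msgf n c) (reff c) xs) {False} = 1 - 1 / 2 ^ c)" for xs
  proof (intro impI conjI)
    assume xs: "length xs = k \<and> (\<forall>x\<in>set xs. length x = n)"
    have "smp_output k m (msgf n c) (reff c) xs = map_pmf (\<lambda>rs. reff c (map (\<lambda>i. msgf n c i (xs!i) ((rs @ [xor_all (c*n) rs])!i)) [0..<k])) (pmf_of_set S)"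
      unfolding smp_output_def xor_shared_def map_pmf_comp m_def S_def by simp
    also have "\<dots> = map_pmf (\<lambda>rs. \<forall>j<c. \<not> G n xs k rs j) (pmf_of_set S)"
    proof (rule map_pmf_cong[OF refl])
      fix rs assume "rs \<in> set_pmf (pmf_of_set S)"
      then have "rs \<in> S" using set_pmf_of_set[OF neS finS] by simp
      then show "reff c (map (\<lambda>i. msgf n c i (xs!i) ((rs @ [xor_all (c*n) rs])!i)) [0..<k])
          = (\<forall>j<c. \<not> G n xs k rs j)"
        by (intro out_val assms(1)) (auto simp: S_def bitstrings_def m_def)
    qed
    finally have out: "smp_output k m (msgf n c) (reff c) xs = map_pmf (\<lambda>rs. \<forall>j<c. \<not> G n xs k rs j) (pmf_of_set S)" .
    {
      assume eq: "\<forall>i<k. \<forall>j<k. xs ! i = xs ! j"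
      have e: "xs!i = xs!(k-1)" if "i < k-1" for i
        using eq[rule_format, of i "k-1"] that assms(1) by simp
      have "\<forall>j<c. \<not> G n xs k rs j" for rs
        unfolding G_def by (intro allI impI par_false) (use e in auto)
      then show "\<forall>b\<in>set_pmf (smp_output k m (msgf n c) (reff c) xs). b = True"
        unfolding out by auto
    }
    {
      assume neq: "\<not> (\<forall>i<k. \<forall>j<k. xs ! i = xs ! j)"
      have "\<exists>i0<k-1. xs!i0 \<noteq> xs!(k-1)"
      proof (rule ccontr)
        assume "\<not> ?thesis"
        then have "\<forall>i<k. xs!i = xs!(k-1)"
          by (metis One_nat_def Suc_pred assms(1) less_Suc_eq not_numeral_le_zero zero_less_iff_neq_zero)
        then show False using neq by metis
      qed
      then obtain i0 where i0: "i0 < k-1" "xs!i0 \<noteq> xs!(k-1)" by blast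
      have ln: "length (xs!i0) = n" "length (xs!(k-1)) = n" using xs i0 assms(1) by (auto)
      have "\<exists>p<n. xs!i0!p \<noteq> xs!(k-1)!p"
      proof (rule ccontr)
        assume "\<not> ?thesis"
        then have "xs!i0 = xs!(k-1)" using ln by (intro nth_equalityI) auto
        then show False using i0(2) by simp
      qed
      then obtain p where p: "p < n" "xs!i0!p \<noteq> xs!(k-1)!p" by blast
      have cnt: "card {rs\<in>S. \<forall>j<c. \<not> G n xs k rs j} * 2^c = card S"
        by (rule count(1)[OF assms(1) _ _ i0(1) p]) (use xs in \<open>auto simp: S_def m_def\<close>)
      define a where "a = card {rs\<in>S. \<forall>j<c. \<not> G n xs k rs j}"
      have sub: "{rs\<in>S. \<forall>j<c. \<not> G n xs k rs j} \<subseteq> S" by auto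
      have "S \<inter> (\<lambda>rs. \<forall>j<c. \<not> G n xs k rs j) -` {False} = S - {rs\<in>S. \<forall>j<c. \<not> G n xs k rs j}" by auto
      then have cd: "card (S \<inter> (\<lambda>rs. \<forall>j<c. \<not> G n xs k rs j) -` {False}) = card S - a"
        using card_Diff_subset[OF finite_subset[OF sub finS] sub] by (simp add: a_def)
      have sp: "card S > 0" using finS neS by (simp add: card_gt_0_iff)
      have as: "a * 2^c = card S" using cnt a_def by simp
      have one: "1 \<le> (2::nat)^c" by simp
      have ale: "a \<le> card S" using mult_le_mono2[OF one, of a] as by simp
      have apos: "a > 0" using as sp by (cases a) auto
      have "measure_pmf.prob (smp_output k m (msgf n c) (reff c) xs) {False}
          = real (card S - a) / real (card S)"
        unfolding out measure_map_pmf measure_pmf_of_set[OF neS finS] cd by simp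
      also have "\<dots> = (real a * 2^c - real a) / (real a * 2^c)"
      proof -
        have r: "real (card S) = real a * 2^c" using as[symmetric] by simp
        have "real (card S - a) = real (card S) - real a" using ale by (rule of_nat_diff)
        then show ?thesis using r by simp
      qed
      also have "\<dots> = 1 - 1 / 2^c" using apos by (simp add: field_simps)
      finally show "measure_pmf.prob (smp_output k m (msgf n c) (reff c) xs) {False} = 1 - 1 / 2 ^ c" .
    }
  qed
  show ?thesis
    apply (rule exI[of _ m])
    apply (rule exI[of _ "msgf n c"])
    apply (rule exI[of _ "reff c"])
    apply (rule conjI)
     apply (rule P1)
    apply (rule allI)
    apply (rule P2)
    done
qed

end
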